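(* Consider a finite discounted stochastic game that is weakly acyclic (under multi-DM strict best replies). For each $i$ let $\lambda^i\in(0,1)$, $\gamma^i,\kappa^i\in(0,1)$, and let the DMs update policies by the Idealized Update Procedure with $h^i=R^{i,\lambda^i}$ for every $i$; let $A_{\bm{\gamma},\bm{\kappa}}$ be the transition matrix of the induced time-homogeneous Markov chain on $\bm{\Pi}$ and $\mu^*_{\bm{\gamma},\bm{\kappa}}$ its unique stationary distribution. Then for every $\epsilon>0$ there exists $\bar\kappa_\epsilon\in(0,1)$ such that whenever $\max\{\gamma^i,\kappa^i\}\in(0,\bar\kappa_\epsilon)$ for all $i$, \[ \mu^*_{\bm{\gamma},\bm{\kappa}}(\bm{\Pi}_{\rm eq})\ge 1-\epsilon/4 . \] Moreover, there exists $\bar m\in\mathbb{N}$, which can be chosen uniformly over all such $\bm{\gamma},\bm{\kappa}$, such that \[ \inf_{m\ge\bar m,\ \mu_0\in\mathcal{P}(\bm{\Pi})}\big(\mu_0A^m_{\bm{\gamma},\bm{\kappa}}\big)(\bm{\Pi}_{\rm eq})\ge 1-\epsilon/2 . \]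
   Context: Game setup: a finite discounted stochastic game with $N$ decision makers, finite state set $\mathbb{X}$, finite action sets $\mathbb{U}^i$, discount factors $\beta^i\in(0,1)$, costs $c^i:\mathbb{X}\times\mathbb{U}\to\mathbb{R}$, transition kernel $P(\cdot\mid x,\mathbf{u})$. $\Pi^i$ = set of maps $\mathbb{X}\to\mathbb{U}^i$, $\bm{\Pi}=\times_i\Pi^i$, $\bm{\pi}=(\pi^i,\bm{\pi}^{-i})$. $J^i_x(\bm{\pi})=E[\sum_{t\ge0}(\beta^i)^tc^i(x_t,\bm{\pi}(x_t))\mid x_0=x]$, $x_{t+1}\sim P(\cdot\mid x_t,\bm{\pi}(x_t))$. $\pi^i$ is a best reply to $\bm{\pi}^{-i}$ if $J^i_x(\pi^i,\bm{\pi}^{-i})=\min_{\sigma^i\in\Pi^i}J^i_x(\sigma^i,\bm{\pi}^{-i})$ for all $x$; $\mathrm{BR}^i(\bm{\pi}^{-i})$ is the set of such $\pi^i$. A best reply $\tilde\pi^i$ to $\bm{\pi}^{-i}$ is a strict best reply with respect to $\bm{\pi}=(\pi^i,\bm{\pi}^{-i})$ if $J^i_x(\tilde\pi^i,\bm{\pi}^{-i})<J^i_x(\pi^i,\bm{\pi}^{-i})$ for some $x$. $\bm{\Pi}_{\rm eq}=\{\bm{\pi}\in\bm{\Pi}:\pi^i\in\mathrm{BR}^i(\bm{\pi}^{-i})\ \forall i\}$. $\bm{\Pi}_{\rm opt}=\{\bm{\pi}^*:J^i_x(\bm{\pi}^* )=\inf_{\bm{\pi}}J^i_x(\bm{\pi})\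 \forall i,x\}$ (possibly empty). A sequence $\bm{\pi}_0,\bm{\pi}_1,\dots$ in $\bm{\Pi}$ is a multi-DM strict best reply path if for each $k$, $\bm{\pi}_k\ne\bm{\pi}_{k+1}$ and for every $i$ with $\pi^i_{k+1}\neq\pi^i_k$, $\pi^i_{k+1}$ is a strict best reply with respect to $\bm{\pi}_k$. The game is weakly acyclic if from every $\bm{\pi}\in\bm{\Pi}$ there is a (finite) multi-DM strict best reply path starting at $\bm{\pi}$ and ending in $\bm{\Pi}_{\rm eq}$. Inertial kernel $R^{i,\lambda}(\tilde\pi^i\mid\pi^i,B^i)$: $1$ if $\pi^i\in B^i,\tilde\pi^i=\pi^i$; $\lambda$ if $\pi^i\notin B^i,\tilde\pi^i=\pi^i$; $(1-\lambda)/|B^i|$ if $\pi^i\notin B^i,\tilde\pi^i\in B^i$; $0$ otherwise. Idealized Update Procedure: given $\bm{\pi}_k$, DMs choose independently: if $\bm{\pi}_k\in\bm{\Pi}_{\rm opt}$, $\pi^i_{k+1}\sim(1-\gamma^i)R^{i,\lambda^i}(\cdot\mid\pi^i_k,\mathrm{BR}^i(\bm{\pi}^{-i}_k))+\gamma^i\mathrm{Unif}(\Pi^i)$; otherwise $\pi^i_{k+1}\sim(1-\kappa^i)h^i(\cdot\mid\pi^i_k,\mathrm{BR}^i(\bm{\pi}^{-i}_k))+\kappa^i\mathrm{Unif}(\Pi^i)$. *)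

theory Defs
  imports Complex_Main
begin

text \<open>DMs are indexed by a finite type 'i, states by a
finite type 'x. All actions live in a common type 'u; the action set of DM i is U i
(finite, nonempty). A joint action is a map 'i => 'u, a joint (stationary deterministic)
policy is a map 'i => 'x => 'u. Costs c i x u, discount factors beta i, and transition
kernel P x u y = P(y | x, u).\<close>

definition Pol :: "('i \<Rightarrow> 'u set) \<Rightarrow> 'i \<Rightarrow> ('x \<Rightarrow> 'u) set" where
  "Pol U i = {f. \<forall>x. f x \<in> U i}"

definition JPol :: "('i \<Rightarrow> 'u set) \<Rightarrow> ('i \<Rightarrow> 'x \<Rightarrow> 'u) set" where
  "JPol U = {p. \<forall>i. p i \<in> Pol U i}"

fun nstep :: "('x::finite \<Rightarrow> ('i \<Rightarrow> 'u) \<Rightarrow> 'x \<Rightarrow> real) \<Rightarrow> ('i \<Rightarrow> 'x \<Rightarrow> 'u) \<Rightarrow> nat \<Rightarrow> 'x \<Rightarrow> 'x \<Rightarrow> real" where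
  "nstep P p 0 x y = (if x = y then 1 else 0)"
| "nstep P p (Suc n) x y = (\<Sum>z\<in>UNIV. nstep P p n x z * P z (\<lambda>j. p j z) y)"

definition J :: "('i \<Rightarrow> real) \<Rightarrow> ('i \<Rightarrow> 'x::finite \<Rightarrow> ('i \<Rightarrow> 'u) \<Rightarrow> real)
    \<Rightarrow> ('x \<Rightarrow> ('i \<Rightarrow> 'u) \<Rightarrow> 'x \<Rightarrow> real) \<Rightarrow> 'i \<Rightarrow> ('i \<Rightarrow> 'x \<Rightarrow> 'u) \<Rightarrow> 'x \<Rightarrow> real" where
  "J \<beta> c P i p x = (\<Sum>t. \<beta> i ^ t * (\<Sum>y\<in>UNIV. nstep P p t x y * c i y (\<lambda>j. p j y)))"

definition BR :: "('i \<Rightarrow> 'u set) \<Rightarrow> ('i \<Rightarrow> real) \<Rightarrow> ('i \<Rightarrow> 'x::finite \<Rightarrow> ('i \<Rightarrow> 'u) \<Rightarrow> real)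
    \<Rightarrow> ('x \<Rightarrow> ('i \<Rightarrow> 'u) \<Rightarrow> 'x \<Rightarrow> real) \<Rightarrow> 'i \<Rightarrow> ('i \<Rightarrow> 'x \<Rightarrow> 'u) \<Rightarrow> ('x \<Rightarrow> 'u) set" where
  "BR U \<beta> c P i p = {\<sigma> \<in> Pol U i. \<forall>x.
      J \<beta> c P i (p(i := \<sigma>)) x = Min ((\<lambda>\<sigma>'. J \<beta> c P i (p(i := \<sigma>')) x) ` Pol U i)}"

definition strict_BR where
  "strict_BR U \<beta> c P i p \<sigma> \<longleftrightarrow>
     \<sigma> \<in> BR U \<beta> c P i p \<and> (\<exists>x. J \<beta> c P i (p(i := \<sigma>)) x < J \<beta> c P i p x)"

definition Eq_set where
  "Eq_set U \<beta> c P = {p \<in> JPol U. \<forall>i. p i \<in> BR U \<beta> c P i p}"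

definition Opt_set where
  "Opt_set U \<beta> c P = {p \<in> JPol U. \<forall>i x. J \<beta> c P i p x = (INF q\<in>JPol U. J \<beta> c P i q x)}"

definition sbr_path where
  "sbr_path U \<beta> c P ps \<longleftrightarrow> set ps \<subseteq> JPol U \<and>
     (\<forall>k. Suc k < length ps \<longrightarrow> ps ! k \<noteq> ps ! Suc k \<and>
        (\<forall>i. (ps ! Suc k) i \<noteq> (ps ! k) i \<longrightarrow> strict_BR U \<beta> c P i (ps ! k) ((ps ! Suc k) i)))"

definition weakly_acyclic where
  "weakly_acyclic U \<beta> c P \<longleftrightarrow> (\<forall>p\<in>JPol U. \<exists>ps. ps \<noteq> [] \<and> hd ps = p \<and>
      sbr_path U \<beta> c P ps \<and> last ps \<in> Eq_set U \<beta> c P)"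

definition Rker :: "real \<Rightarrow> 'a \<Rightarrow> 'a \<Rightarrow> 'a set \<Rightarrow> real" where
  "Rker lam \<sigma>' \<sigma> B =
     (if \<sigma> \<in> B then (if \<sigma>' = \<sigma> then 1 else 0)
      else if \<sigma>' = \<sigma> then lam
      else if \<sigma>' \<in> B then (1 - lam) / real (card B) else 0)"

definition unif_pol :: "('i \<Rightarrow> 'u set) \<Rightarrow> 'i \<Rightarrow> ('x \<Rightarrow> 'u) \<Rightarrow> real" where
  "unif_pol U i \<sigma>' = (if \<sigma>' \<in> Pol U i then 1 / real (card (Pol U i :: ('x \<Rightarrow> 'u) set)) else 0)"

definition Amat where
  "Amat U \<beta> c P lam \<gamma> \<kappa> p q =
     (\<Prod>i\<in>UNIV.
        if p \<in> Opt_set U \<beta> c P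
        then (1 - \<gamma> i) * Rker (lam i) (q i) (p i) (BR U \<beta> c P i p) + \<gamma> i * unif_pol U i (q i)
        else (1 - \<kappa> i) * Rker (lam i) (q i) (p i) (BR U \<beta> c P i p) + \<kappa> i * unif_pol U i (q i))"

definition is_dist where
  "is_dist U \<mu> \<longleftrightarrow> (\<forall>p. 0 \<le> \<mu> p) \<and> (\<forall>p. p \<notin> JPol U \<longrightarrow> \<mu> p = 0) \<and> sum \<mu> (JPol U) = 1"

definition mulA where
  "mulA U A \<mu> q = (\<Sum>p\<in>JPol U. \<mu> p * A p q)"

definition stationary where
  "stationary U A \<mu> \<longleftrightarrow> is_dist U \<mu> \<and> (\<forall>q\<in>JPol U. mulA U A \<mu> q = \<mu> q)"

end

theory Submission
  imports Defs "HOL-Library.FuncSet"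
begin


lemma Pol_eq: "Pol U i = PiE UNIV (\<lambda>_. U i)"
  by (auto simp: Pol_def PiE_UNIV_domain Pi_def)

lemma JPol_eq: "JPol U = PiE UNIV (Pol U)"
  by (auto simp: JPol_def PiE_UNIV_domain Pi_def)

lemma finite_Pol: "finite (U i) \<Longrightarrow> finite (Pol U i :: ('x::finite \<Rightarrow> 'u) set)"
  unfolding Pol_eq by (rule finite_PiE) auto

lemma Pol_ne: "U i \<noteq> {} \<Longrightarrow> Pol U i \<noteq> {}"
  unfolding Pol_def by (rule ex_in_conv[THEN iffD1], rule exI[of _ "\<lambda>x. SOME u. u \<in> U i"]) (auto intro: someI_ex)

lemma finite_JPol: "(\<And>i. finite (U i)) \<Longrightarrow> finite (JPol U :: ('i::finite \<Rightarrow> 'x::finite \<Rightarrow> 'u) set)"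
  unfolding JPol_eq by (rule finite_PiE) (auto intro: finite_Pol)

lemma JPol_act: "q \<in> JPol U \<Longrightarrow> \<forall>j. q j z \<in> U j"
  by (auto simp: JPol_def Pol_def)

lemma JPol_upd: "q \<in> JPol U \<Longrightarrow> \<sigma> \<in> Pol U i \<Longrightarrow> q(i := \<sigma>) \<in> JPol U"
  by (auto simp: JPol_def)

lemma d1: "(\<Sum>z\<in>(UNIV::'a::finite set). (if x = z then 1 else 0) * (f z::real)) = f x"
  by (simp add: if_distrib[of "\<lambda>a. a * _"] cong: if_cong)
lemma d2: "(\<Sum>z\<in>(UNIV::'a::finite set). (f z::real) * (if z = y then 1 else 0)) = f y"
  by (simp add: if_distrib[of "\<lambda>a. _ * a"] cong: if_cong)

lemma nstep_Suc_left:
  "nstep P q (Suc n) x y = (\<Sum>z\<in>UNIV. P x (\<lambda>j. q j x) z * nstep P q n z y)"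
proof (induction n arbitrary: x y)
  case 0
  then show ?case by (simp add: d1 d2)
next
  case (Suc n)
  have "nstep P q (Suc (Suc n)) x y = (\<Sum>z\<in>UNIV. (\<Sum>w\<in>UNIV. P x (\<lambda>j. q j x) w * nstep P q n w z) * P z (\<lambda>j. q j z) y)"
    by (simp only: nstep.simps(2)[of P q "Suc n"] Suc.IH)
  also have "\<dots> = (\<Sum>w\<in>UNIV. P x (\<lambda>j. q j x) w * (\<Sum>z\<in>UNIV. nstep P q n w z * P z (\<lambda>j. q j z) y))"
    by (simp add: sum_distrib_left sum_distrib_right mult.assoc) (rule sum.swap)
  also have "\<dots> = (\<Sum>w\<in>UNIV. P x (\<lambda>j. q j x) w * nstep P q (Suc n) w y)"
    by simp
  finally show ?case .
qed

locale game =
  fixes U :: "'i::finite \<Rightarrow> 'u set"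
    and \<beta> :: "'i \<Rightarrow> real"
    and c :: "'i \<Rightarrow> 'x::finite \<Rightarrow> ('i \<Rightarrow> 'u) \<Rightarrow> real"
    and P :: "'x \<Rightarrow> ('i \<Rightarrow> 'u) \<Rightarrow> 'x \<Rightarrow> real"
  assumes U_fin: "\<And>i. finite (U i)" and U_ne: "\<And>i. U i \<noteq> {}"
    and beta: "\<And>i. 0 < \<beta> i \<and> \<beta> i < 1"
    and P_nonneg: "\<And>x u y. (\<forall>i. u i \<in> U i) \<Longrightarrow> 0 \<le> P x u y"
    and P_sum: "\<And>x u. (\<forall>i. u i \<in> U i) \<Longrightarrow> (\<Sum>y\<in>UNIV. P x u y) = 1"
begin

lemma M_nonneg: "q \<in> JPol U \<Longrightarrow> 0 \<le> P x (\<lambda>j. q j x) y"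
  by (rule P_nonneg) (simp add: JPol_act)

lemma M_sum: "q \<in> JPol U \<Longrightarrow> (\<Sum>y\<in>UNIV. P x (\<lambda>j. q j x) y) = 1"
  by (rule P_sum) (simp add: JPol_act)

lemma nstep_nonneg: "q \<in> JPol U \<Longrightarrow> 0 \<le> nstep P q n x y"
  by (induction n arbitrary: y) (auto intro!: sum_nonneg mult_nonneg_nonneg M_nonneg)

lemma nstep_sum: "q \<in> JPol U \<Longrightarrow> (\<Sum>y\<in>UNIV. nstep P q n x y) = 1"
proof (induction n)
  case 0
  then show ?case by simp
next
  case (Suc n)
  have "(\<Sum>y\<in>UNIV. nstep P q (Suc n) x y) = (\<Sum>z\<in>UNIV. nstep P q n x z * (\<Sum>y\<in>UNIV. P z (\<lambda>j. q j z) y))"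
    by (simp add: sum_distrib_left) (rule sum.swap)
  also have "\<dots> = 1" using Suc by (simp add: M_sum)
  finally show ?case .
qed

lemma nstep_le1: "q \<in> JPol U \<Longrightarrow> nstep P q n x y \<le> 1"
proof -
  assume q: "q \<in> JPol U"
  have "nstep P q n x y \<le> (\<Sum>y\<in>UNIV. nstep P q n x y)"
    by (rule member_le_sum) (auto simp: nstep_nonneg q)
  then show ?thesis using nstep_sum[OF q] by simp
qed

definition tm where
  "tm i q x t = \<beta> i ^ t * (\<Sum>y\<in>UNIV. nstep P q t x y * c i y (\<lambda>j. q j y))"

lemma J_tm: "J \<beta> c P i q x = (\<Sum>t. tm i q x t)"
  by (simp add: J_def tm_def)

lemma tm_summable: "q \<in> JPol U \<Longrightarrow> summable (tm i q x)"
proof -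
  assume q: "q \<in> JPol U"
  let ?C = "\<Sum>y\<in>UNIV. \<bar>c i y (\<lambda>j. q j y)\<bar>"
  have b: "0 \<le> \<beta> i" "\<beta> i < 1" using beta[of i] by auto
  show ?thesis
  proof (rule summable_comparison_test)
    show "\<exists>N. \<forall>n\<ge>N. norm (tm i q x n) \<le> ?C * \<beta> i ^ n"
    proof (intro exI allI impI)
      fix n :: nat
      have "\<bar>\<Sum>y\<in>UNIV. nstep P q n x y * c i y (\<lambda>j. q j y)\<bar> \<le> (\<Sum>y\<in>UNIV. \<bar>nstep P q n x y * c i y (\<lambda>j. q j y)\<bar>)"
        by (rule sum_abs)
      also have "\<dots> \<le> ?C"
      proof (rule sum_mono)
        fix y
        have "\<bar>nstep P q n x y\<bar> \<le> 1" using nstep_nonneg[OF q] nstep_le1[OF q] by (simp add: abs_le_iff)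
        then show "\<bar>nstep P q n x y * c i y (\<lambda>j. q j y)\<bar> \<le> \<bar>c i y (\<lambda>j. q j y)\<bar>"
          by (simp add: abs_mult mult_left_le_one_le)
      qed
      finally show "norm (tm i q x n) \<le> ?C * \<beta> i ^ n"
        using b by (simp add: tm_def abs_mult mult.commute mult_left_mono)
    qed
    show "summable (\<lambda>n. ?C * \<beta> i ^ n)"
      using b by (intro summable_mult summable_geometric) simp
  qed
qed

lemma bellman:
  assumes q: "q \<in> JPol U"
  shows "J \<beta> c P i q x = c i x (\<lambda>j. q j x) + \<beta> i * (\<Sum>z\<in>UNIV. P x (\<lambda>j. q j x) z * J \<beta> c P i q z)"
proof -
  have s: "summable (tm i q x)" by (rule tm_summable[OF q])
  have t0: "tm i q x 0 = c i x (\<lambda>j. q j x)"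
    by (simp add: tm_def d1)
  have tS: "tm i q x (Suc t) = \<beta> i * (\<Sum>z\<in>UNIV. P x (\<lambda>j. q j x) z * tm i q z t)" for t
  proof -
    have "tm i q x (Suc t) = \<beta> i * \<beta> i ^ t * (\<Sum>y\<in>UNIV. (\<Sum>z\<in>UNIV. P x (\<lambda>j. q j x) z * nstep P q t z y) * c i y (\<lambda>j. q j y))"
      by (simp add: tm_def nstep_Suc_left del: nstep.simps)
    also have "\<dots> = \<beta> i * \<beta> i ^ t * (\<Sum>z\<in>UNIV. P x (\<lambda>j. q j x) z * (\<Sum>y\<in>UNIV. nstep P q t z y * c i y (\<lambda>j. q j y)))"
      by (simp add: sum_distrib_left sum_distrib_right mult.assoc) (rule sum.swap)
    also have "\<dots> = \<beta> i * (\<Sum>z\<in>UNIV. P x (\<lambda>j. q j x) z * tm i q z t)"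
      by (simp add: tm_def sum_distrib_left mult.assoc mult.left_commute)
    finally show ?thesis .
  qed
  have "J \<beta> c P i q x = tm i q x 0 + (\<Sum>t. tm i q x (Suc t))"
    using suminf_split_head[OF s] by (simp add: J_tm)
  also have "(\<Sum>t. tm i q x (Suc t)) = (\<Sum>t. \<beta> i * (\<Sum>z\<in>UNIV. P x (\<lambda>j. q j x) z * tm i q z t))"
    by (simp only: tS)
  also have "\<dots> = \<beta> i * (\<Sum>t. (\<Sum>z\<in>UNIV. P x (\<lambda>j. q j x) z * tm i q z t))"
    by (rule suminf_mult) (intro summable_sum summable_mult tm_summable q)
  also have "(\<Sum>t. (\<Sum>z\<in>UNIV. P x (\<lambda>j. q j x) z * tm i q z t)) = (\<Sum>z\<in>UNIV. (\<Sum>t. P x (\<lambda>j. q j x) z * tm i q z t))"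
    by (rule suminf_sum) (intro summable_mult tm_summable q)
  also have "\<dots> = (\<Sum>z\<in>UNIV. P x (\<lambda>j. q j x) z * J \<beta> c P i q z)"
    by (intro sum.cong refl) (simp add: J_tm suminf_mult tm_summable q)
  finally show ?thesis using t0 by simp
qed

end


lemma ex_min_on: "finite S \<Longrightarrow> S \<noteq> {} \<Longrightarrow> \<exists>x0\<in>S. \<forall>x\<in>S. (f x0::real) \<le> f x"
proof -
  assume S: "finite S" "S \<noteq> {}"
  have "Min (f ` S) \<in> f ` S" using S by (intro Min_in) auto
  then obtain x0 where "x0 \<in> S" "f x0 = Min (f ` S)" by auto
  then show ?thesis using S by (metis Min_le finite_imageI imageI)
qed

lemma ex_max_on: "finite S \<Longrightarrow> S \<noteq> {} \<Longrightarrow> \<exists>x0\<in>S. \<forall>x\<in>S. f x \<le> (f x0::real)"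
proof -
  assume S: "finite S" "S \<noteq> {}"
  have "Max (f ` S) \<in> f ` S" using S by (intro Max_in) auto
  then obtain x0 where "x0 \<in> S" "f x0 = Max (f ` S)" by auto
  then show ?thesis using S by (metis Max_ge finite_imageI imageI)
qed

context game
begin

lemma M_avg_ge:
  assumes q: "q \<in> JPol U" and a: "\<And>z. a \<le> f z"
  shows "a \<le> (\<Sum>z\<in>UNIV. P x (\<lambda>j. q j x) z * f z)"
proof -
  have "(\<Sum>z\<in>UNIV. P x (\<lambda>j. q j x) z * a) \<le> (\<Sum>z\<in>UNIV. P x (\<lambda>j. q j x) z * f z)"
    by (rule sum_mono) (simp add: mult_left_mono M_nonneg q a)
  moreover have "(\<Sum>z\<in>UNIV. P x (\<lambda>j. q j x) z * a) = a"
    by (simp add: sum_distrib_right[symmetric] M_sum q)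
  ultimately show ?thesis by simp
qed

lemma M_avg_le:
  assumes q: "q \<in> JPol U" and a: "\<And>z. f z \<le> a"
  shows "(\<Sum>z\<in>UNIV. P x (\<lambda>j. q j x) z * f z) \<le> a"
proof -
  have "(\<Sum>z\<in>UNIV. P x (\<lambda>j. q j x) z * f z) \<le> (\<Sum>z\<in>UNIV. P x (\<lambda>j. q j x) z * a)"
    by (rule sum_mono) (simp add: mult_left_mono M_nonneg q a)
  moreover have "(\<Sum>z\<in>UNIV. P x (\<lambda>j. q j x) z * a) = a"
    by (simp add: sum_distrib_right[symmetric] M_sum q)
  ultimately show ?thesis by simp
qed

lemma M_diff: "(\<Sum>z\<in>UNIV. P x u z * f z) - (\<Sum>z\<in>UNIV. P x u z * g z) = (\<Sum>z\<in>UNIV. P x u z * (f z - g z))"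
  by (simp add: sum_subtractf right_diff_distrib)

lemma cmp_ge:
  assumes q: "q \<in> JPol U"
    and W: "\<And>x. W x \<le> c i x (\<lambda>j. q j x) + \<beta> i * (\<Sum>z\<in>UNIV. P x (\<lambda>j. q j x) z * W z)"
  shows "W x \<le> J \<beta> c P i q x"
proof -
  define E where "E x = J \<beta> c P i q x - W x" for x
  have E: "\<beta> i * (\<Sum>z\<in>UNIV. P x (\<lambda>j. q j x) z * E z) \<le> E x" for x
  proof -
    have "\<beta> i * (\<Sum>z\<in>UNIV. P x (\<lambda>j. q j x) z * E z) = \<beta> i * (\<Sum>z\<in>UNIV. P x (\<lambda>j. q j x) z * J \<beta> c P i q z) - \<beta> i * (\<Sum>z\<in>UNIV. P x (\<lambda>j. q j x) z * W z)"
      unfolding E_def by (simp add: right_diff_distrib sum_subtractf)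
    then show ?thesis using bellman[OF q, of i x] W[of x] unfolding E_def by linarith
  qed
  obtain x0 where x0: "\<forall>x. E x0 \<le> E x" using ex_min_on[of UNIV E] by auto
  have "0 \<le> E x0"
  proof (rule ccontr)
    assume neg: "\<not> 0 \<le> E x0"
    have "E x0 \<le> (\<Sum>z\<in>UNIV. P x0 (\<lambda>j. q j x0) z * E z)" by (rule M_avg_ge[OF q]) (use x0 in auto)
    then have "\<beta> i * E x0 \<le> \<beta> i * (\<Sum>z\<in>UNIV. P x0 (\<lambda>j. q j x0) z * E z)"
      using beta[of i] by (simp add: mult_left_mono)
    also have "\<dots> \<le> E x0" by (rule E)
    finally have "\<beta> i * E x0 \<le> E x0" .
    moreover have "E x0 < \<beta> i * E x0"
    proof -
      have "(1 - \<beta> i) * E x0 < 0" using neg beta[of i] by (intro mult_pos_neg) auto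
      then show ?thesis by (simp add: algebra_simps)
    qed
    ultimately show False by simp
  qed
  then show ?thesis using x0[rule_format, of x] unfolding E_def by linarith
qed

lemma cmp_le:
  assumes q: "q \<in> JPol U"
    and W: "\<And>x. c i x (\<lambda>j. q j x) + \<beta> i * (\<Sum>z\<in>UNIV. P x (\<lambda>j. q j x) z * W z) \<le> W x"
  shows "J \<beta> c P i q x \<le> W x"
    and "c i x (\<lambda>j. q j x) + \<beta> i * (\<Sum>z\<in>UNIV. P x (\<lambda>j. q j x) z * W z) < W x \<Longrightarrow> J \<beta> c P i q x < W x"
proof -
  define E where "E x = J \<beta> c P i q x - W x" for x
  have E: "E x = (c i x (\<lambda>j. q j x) + \<beta> i * (\<Sum>z\<in>UNIV. P x (\<lambda>j. q j x) z * W z) - W x) + \<beta> i * (\<Sum>z\<in>UNIV. P x (\<lambda>j. q j x) z * E z)" for x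
  proof -
    have "\<beta> i * (\<Sum>z\<in>UNIV. P x (\<lambda>j. q j x) z * E z) = \<beta> i * (\<Sum>z\<in>UNIV. P x (\<lambda>j. q j x) z * J \<beta> c P i q z) - \<beta> i * (\<Sum>z\<in>UNIV. P x (\<lambda>j. q j x) z * W z)"
      unfolding E_def by (simp add: right_diff_distrib sum_subtractf)
    then show ?thesis using bellman[OF q, of i x] unfolding E_def by linarith
  qed
  obtain x0 where x0: "\<forall>x. E x \<le> E x0" using ex_max_on[of UNIV E] by auto
  have le0: "E x0 \<le> 0"
  proof (rule ccontr)
    assume pos: "\<not> E x0 \<le> 0"
    have "(\<Sum>z\<in>UNIV. P x0 (\<lambda>j. q j x0) z * E z) \<le> E x0" by (rule M_avg_le[OF q]) (use x0 in auto)
    then have "\<beta> i * (\<Sum>z\<in>UNIV. P x0 (\<lambda>j. q j x0) z * E z) \<le> \<beta> i * E x0"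
      using beta[of i] by (simp add: mult_left_mono)
    moreover have "\<beta> i * E x0 < E x0"
    proof -
      have "0 < (1 - \<beta> i) * E x0" using pos beta[of i] by (intro mult_pos_pos) auto
      then show ?thesis by (simp add: algebra_simps)
    qed
    ultimately have "E x0 < E x0" using E[of x0] W[of x0] by linarith
    then show False by simp
  qed
  have avg: "\<beta> i * (\<Sum>z\<in>UNIV. P x (\<lambda>j. q j x) z * E z) \<le> 0"
  proof -
    have "(\<Sum>z\<in>UNIV. P x (\<lambda>j. q j x) z * E z) \<le> 0" by (rule M_avg_le[OF q]) (meson x0 le0 order_trans)
    then show ?thesis using beta[of i] by (simp add: mult_nonneg_nonpos)
  qed
  show "J \<beta> c P i q x \<le> W x" using x0[rule_format, of x] le0 unfolding E_def by linarith
  show "c i x (\<lambda>j. q j x) + \<beta> i * (\<Sum>z\<in>UNIV. P x (\<lambda>j. q j x) z * W z) < W x \<Longrightarrow> J \<beta> c P i q x < W x"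
    using E[of x] avg unfolding E_def by linarith
qed

lemma BR_ne:
  assumes p: "p \<in> JPol U"
  shows "BR U \<beta> c P i p \<noteq> {}"
proof -
  define \<Phi> where "\<Phi> \<sigma> = (\<Sum>x\<in>UNIV. J \<beta> c P i (p(i := \<sigma>)) x)" for \<sigma>
  have finP: "finite (Pol U i :: ('x \<Rightarrow> 'u) set)" by (rule finite_Pol) (rule U_fin)
  have neP: "(Pol U i :: ('x \<Rightarrow> 'u) set) \<noteq> {}" by (rule Pol_ne) (rule U_ne)
  obtain \<sigma>s where \<sigma>s: "\<sigma>s \<in> Pol U i" and mins: "\<forall>\<sigma>\<in>Pol U i. \<Phi> \<sigma>s \<le> \<Phi> \<sigma>"
    using ex_min_on[OF finP neP, of \<Phi>] by auto
  define qs where "qs = p(i := \<sigma>s)"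
  have qs: "qs \<in> JPol U" unfolding qs_def by (rule JPol_upd[OF p \<sigma>s])
  define W where "W = J \<beta> c P i qs"
  have opt: "W x \<le> J \<beta> c P i (p(i := \<sigma>')) x" if \<sigma>': "\<sigma>' \<in> Pol U i" for \<sigma>' x
  proof -
    define q' where "q' = p(i := \<sigma>')"
    have q': "q' \<in> JPol U" unfolding q'_def by (rule JPol_upd[OF p \<sigma>'])
    define D where "D z = c i z (\<lambda>j. q' j z) + \<beta> i * (\<Sum>y\<in>UNIV. P z (\<lambda>j. q' j z) y * W y) - W z" for z
    show ?thesis
    proof (cases "\<forall>z. 0 \<le> D z")
      case True
      show ?thesis unfolding q'_def[symmetric]
        by (rule cmp_ge[OF q']) (use True in \<open>auto simp: D_def\<close>)
    next
      case False
      then obtain x0 where x0: "D x0 < 0" by (auto simp: not_le)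
      define \<sigma>'' where "\<sigma>'' z = (if D z < 0 then \<sigma>' z else \<sigma>s z)" for z
      have \<sigma>'': "\<sigma>'' \<in> Pol U i" using \<sigma>' \<sigma>s by (auto simp: Pol_def \<sigma>''_def)
      define q'' where "q'' = p(i := \<sigma>'')"
      have q'': "q'' \<in> JPol U" unfolding q''_def by (rule JPol_upd[OF p \<sigma>''])
      have eqz: "(\<lambda>j. q'' j z) = (if D z < 0 then (\<lambda>j. q' j z) else (\<lambda>j. qs j z))" for z
        by (rule ext) (simp add: q''_def q'_def qs_def \<sigma>''_def)
      have bell_s: "c i z (\<lambda>j. qs j z) + \<beta> i * (\<Sum>y\<in>UNIV. P z (\<lambda>j. qs j z) y * W y) = W z" for z
        using bellman[OF qs, of i z] unfolding W_def by simp
      have Tz: "c i z (\<lambda>j. q'' j z) + \<beta> i * (\<Sum>y\<in>UNIV. P z (\<lambda>j. q'' j z) y * W y)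
          = (if D z < 0 then D z + W z else W z)" for z
        unfolding eqz by (cases "D z < 0") (simp_all add: D_def bell_s)
      have le: "c i z (\<lambda>j. q'' j z) + \<beta> i * (\<Sum>y\<in>UNIV. P z (\<lambda>j. q'' j z) y * W y) \<le> W z" for z
        unfolding Tz by simp
      have lt: "c i x0 (\<lambda>j. q'' j x0) + \<beta> i * (\<Sum>y\<in>UNIV. P x0 (\<lambda>j. q'' j x0) y * W y) < W x0"
        unfolding Tz using x0 by simp
      have "\<Phi> \<sigma>'' < \<Phi> \<sigma>s"
        unfolding \<Phi>_def q''_def[symmetric] qs_def[symmetric] W_def[symmetric]
      proof (rule sum_strict_mono_ex1)
        show "\<forall>x\<in>UNIV. J \<beta> c P i q'' x \<le> W x" using cmp_le(1)[OF q'' le] by blast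
        show "\<exists>a\<in>UNIV. J \<beta> c P i q'' a < W a" using cmp_le(2)[OF q'' le lt] by blast
      qed simp
      with mins \<sigma>'' show ?thesis by force
    qed
  qed
  have "\<sigma>s \<in> BR U \<beta> c P i p"
    unfolding BR_def
  proof (intro CollectI conjI allI \<sigma>s)
    fix x
    show "J \<beta> c P i (p(i := \<sigma>s)) x = Min ((\<lambda>\<sigma>'. J \<beta> c P i (p(i := \<sigma>')) x) ` Pol U i)"
    proof -
      have "Min ((\<lambda>\<sigma>'. J \<beta> c P i (p(i := \<sigma>')) x) ` Pol U i) = J \<beta> c P i (p(i := \<sigma>s)) x"
      proof (rule Min_eqI)
        show "finite ((\<lambda>\<sigma>'. J \<beta> c P i (p(i := \<sigma>')) x) ` Pol U i)" using finP by simp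
        show "J \<beta> c P i (p(i := \<sigma>s)) x \<in> (\<lambda>\<sigma>'. J \<beta> c P i (p(i := \<sigma>')) x) ` Pol U i" using \<sigma>s by simp
        fix y assume "y \<in> (\<lambda>\<sigma>'. J \<beta> c P i (p(i := \<sigma>')) x) ` Pol U i"
        then obtain \<sigma>' where "\<sigma>' \<in> Pol U i" "y = J \<beta> c P i (p(i := \<sigma>')) x" by blast
        then show "J \<beta> c P i (p(i := \<sigma>s)) x \<le> y" using opt unfolding W_def qs_def by blast
      qed
      then show ?thesis by simp
    qed
  qed
  then show ?thesis by auto
qed

end


definition Gf where
  "Gf U \<beta> c P lam t i p \<sigma> = (1 - t) * Rker (lam i) \<sigma> (p i) (BR U \<beta> c P i p) + t * unif_pol U i \<sigma>"

lemma Amat_eq: "Amat U \<beta> c P lam \<gamma> \<kappa> p q =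
   (\<Prod>i\<in>UNIV. Gf U \<beta> c P lam (if p \<in> Opt_set U \<beta> c P then \<gamma> i else \<kappa> i) i p (q i))"
  by (cases "p \<in> Opt_set U \<beta> c P") (simp_all add: Amat_def Gf_def)

lemma Rker_nonneg: "0 \<le> l \<Longrightarrow> l \<le> 1 \<Longrightarrow> 0 \<le> Rker l a b B"
  by (simp add: Rker_def)

lemma unif_nonneg: "0 \<le> unif_pol U i \<sigma>"
  by (simp add: unif_pol_def)

lemma sum_Rker:
  assumes fin: "finite A" and s: "\<sigma> \<in> A" and B: "B \<subseteq> A" "B \<noteq> {}"
  shows "(\<Sum>\<tau>\<in>A. Rker l \<tau> \<sigma> B) = 1"
proof (cases "\<sigma> \<in> B")
  case True
  then have "(\<Sum>\<tau>\<in>A. Rker l \<tau> \<sigma> B) = (\<Sum>\<tau>\<in>A. if \<tau> = \<sigma> then 1 else 0)"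
    by (intro sum.cong) (auto simp: Rker_def)
  also have "\<dots> = 1" using fin s by simp
  finally show ?thesis .
next
  case False
  have finB: "finite B" using fin B finite_subset by blast
  have cB: "card B > 0" using finB B by (simp add: card_gt_0_iff)
  have "(\<Sum>\<tau>\<in>A. Rker l \<tau> \<sigma> B) = (\<Sum>\<tau>\<in>A. (if \<tau> = \<sigma> then l else 0) + (if \<tau> \<in> B then (1 - l) / real (card B) else 0))"
    using False by (intro sum.cong) (auto simp: Rker_def)
  also have "\<dots> = l + (\<Sum>\<tau>\<in>A \<inter> B. (1 - l) / real (card B))"
    using fin s by (simp add: sum.distrib sum.inter_restrict[symmetric])
  also have "A \<inter> B = B" using B by auto
  also have "l + (\<Sum>\<tau>\<in>B. (1 - l) / real (card B)) = 1" using cB by simp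
  finally show ?thesis .
qed

lemma sum_unif:
  assumes "finite (Pol U i :: ('x \<Rightarrow> 'u) set)" "(Pol U i :: ('x \<Rightarrow> 'u) set) \<noteq> {}"
  shows "(\<Sum>\<tau>\<in>(Pol U i :: ('x \<Rightarrow> 'u) set). unif_pol U i \<tau>) = 1"
  using assms by (simp add: unif_pol_def)

lemma BR_sub: "BR U \<beta> c P i p \<subseteq> Pol U i"
  by (auto simp: BR_def)

lemma strict_not_BR:
  fixes p :: "'i \<Rightarrow> 'x::finite \<Rightarrow> 'u"
  assumes sb: "strict_BR U \<beta> c P i p \<sigma>" and finP: "finite (Pol U i :: ('x \<Rightarrow> 'u) set)"
  shows "p i \<notin> BR U \<beta> c P i p"
proof
  assume pB: "p i \<in> BR U \<beta> c P i p"
  from sb have \<sigma>: "\<sigma> \<in> Pol U i" and x: "\<exists>x. J \<beta> c P i (p(i := \<sigma>)) x < J \<beta> c P i p x"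
    by (auto simp: strict_BR_def BR_def)
  then obtain x where x: "J \<beta> c P i (p(i := \<sigma>)) x < J \<beta> c P i p x" by blast
  have "J \<beta> c P i (p(i := p i)) x = Min ((\<lambda>\<sigma>'. J \<beta> c P i (p(i := \<sigma>')) x) ` Pol U i)"
    using pB by (simp add: BR_def)
  also have "\<dots> \<le> J \<beta> c P i (p(i := \<sigma>)) x"
    using finP \<sigma> by (intro Min_le) auto
  finally show False using x by simp
qed

context game
begin

lemma Amat_nonneg:
  fixes lam \<gamma> \<kappa> :: "'i \<Rightarrow> real"
  assumes lam: "\<And>i. 0 < lam i \<and> lam i < 1"
    and t: "\<And>i. 0 \<le> \<gamma> i \<and> \<gamma> i \<le> 1 \<and> 0 \<le> \<kappa> i \<and> \<kappa> i \<le> 1"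
  shows "0 \<le> Amat U \<beta> c P lam \<gamma> \<kappa> p q"
  unfolding Amat_eq Gf_def
  by (intro prod_nonneg ballI add_nonneg_nonneg mult_nonneg_nonneg Rker_nonneg unif_nonneg)
     (use lam t in \<open>auto simp: less_imp_le\<close>)

lemma Amat_rowsum:
  fixes lam \<gamma> \<kappa> :: "'i \<Rightarrow> real"
  assumes lam: "\<And>i. 0 < lam i \<and> lam i < 1"
    and p: "p \<in> JPol U"
  shows "(\<Sum>q\<in>JPol U. Amat U \<beta> c P lam \<gamma> \<kappa> p q) = 1"
proof -
  define th where "th i = (if p \<in> Opt_set U \<beta> c P then \<gamma> i else \<kappa> i)" for i
  have finP: "finite (Pol U i :: ('x \<Rightarrow> 'u) set)" for i by (rule finite_Pol) (rule U_fin)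
  have neP: "(Pol U i :: ('x \<Rightarrow> 'u) set) \<noteq> {}" for i by (rule Pol_ne) (rule U_ne)
  have one: "(\<Sum>\<sigma>\<in>Pol U i. Gf U \<beta> c P lam (th i) i p \<sigma>) = 1" for i
  proof -
    have pi: "p i \<in> Pol U i" using p by (auto simp: JPol_def)
    have "(\<Sum>\<sigma>\<in>Pol U i. Gf U \<beta> c P lam (th i) i p \<sigma>) =
      (1 - th i) * (\<Sum>\<sigma>\<in>Pol U i. Rker (lam i) \<sigma> (p i) (BR U \<beta> c P i p)) + th i * (\<Sum>\<sigma>\<in>(Pol U i :: ('x \<Rightarrow> 'u) set). unif_pol U i \<sigma>)"
      by (simp add: Gf_def sum.distrib sum_distrib_left)
    also have "\<dots> = 1"
      using sum_Rker[OF finP pi BR_sub BR_ne[OF p]] sum_unif[OF finP neP] by simp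
    finally show ?thesis .
  qed
  have "(\<Sum>q\<in>JPol U. Amat U \<beta> c P lam \<gamma> \<kappa> p q) = (\<Sum>q\<in>PiE UNIV (Pol U). \<Prod>i\<in>UNIV. Gf U \<beta> c P lam (th i) i p (q i))"
    unfolding Amat_eq JPol_eq th_def ..
  also have "\<dots> = (\<Prod>i\<in>UNIV. \<Sum>\<sigma>\<in>Pol U i. Gf U \<beta> c P lam (th i) i p \<sigma>)"
    by (rule prod_sum_PiE[symmetric]) (auto intro: finP)
  also have "\<dots> = 1" by (simp add: one)
  finally show ?thesis .
qed

lemma Amat_lower:
  fixes lam \<gamma> \<kappa> :: "'i \<Rightarrow> real"
  assumes lam: "\<And>i. 0 < lam i \<and> lam i < 1"
    and t: "\<And>i. 0 \<le> \<gamma> i \<and> \<gamma> i \<le> kb \<and> 0 \<le> \<kappa> i \<and> \<kappa> i \<le> kb" and kb: "kb \<le> 1"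
    and R: "\<And>i. 0 \<le> r i \<and> r i \<le> Rker (lam i) (q i) (p i) (BR U \<beta> c P i p)"
  shows "(\<Prod>i\<in>UNIV. (1 - kb) * r i) \<le> Amat U \<beta> c P lam \<gamma> \<kappa> p q"
  unfolding Amat_eq
proof (rule prod_mono, rule conjI)
  fix i :: 'i
  define th where "th = (if p \<in> Opt_set U \<beta> c P then \<gamma> i else \<kappa> i)"
  have th: "0 \<le> th" "th \<le> kb" using t[of i] by (auto simp: th_def)
  show "0 \<le> (1 - kb) * r i" using kb R[of i] by simp
  have "(1 - kb) * r i \<le> (1 - th) * Rker (lam i) (q i) (p i) (BR U \<beta> c P i p)"
    using R[of i] th kb by (intro mult_mono) auto
  also have "\<dots> \<le> Gf U \<beta> c P lam th i p (q i)"
    unfolding Gf_def using th kb by (simp add: unif_nonneg)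
  finally show "(1 - kb) * r i \<le> Gf U \<beta> c P lam (if p \<in> Opt_set U \<beta> c P then \<gamma> i else \<kappa> i) i p (q i)"
    by (simp add: th_def)
qed

lemma Amat_stay:
  fixes lam \<gamma> \<kappa> :: "'i \<Rightarrow> real"
  assumes lam: "\<And>i. 0 < lam i \<and> lam i < 1"
    and t: "\<And>i. 0 \<le> \<gamma> i \<and> \<gamma> i \<le> kb \<and> 0 \<le> \<kappa> i \<and> \<kappa> i \<le> kb" and kb: "kb \<le> 1"
    and p: "p \<in> Eq_set U \<beta> c P"
  shows "(1 - kb) ^ card (UNIV :: 'i set) \<le> Amat U \<beta> c P lam \<gamma> \<kappa> p p"
proof -
  have "(\<Prod>i\<in>(UNIV::'i set). (1 - kb) * 1) \<le> Amat U \<beta> c P lam \<gamma> \<kappa> p p"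
  proof (rule Amat_lower)
    show "\<And>i. 0 < lam i \<and> lam i < 1" by (rule lam)
    show "\<And>i. 0 \<le> \<gamma> i \<and> \<gamma> i \<le> kb \<and> 0 \<le> \<kappa> i \<and> \<kappa> i \<le> kb" by (rule t)
    show "kb \<le> 1" by (rule kb)
    show "\<And>i. 0 \<le> (1::real) \<and> 1 \<le> Rker (lam i) (p i) (p i) (BR U \<beta> c P i p)"
      using p by (auto simp: Eq_set_def Rker_def)
  qed
  then show ?thesis by simp
qed

lemma Amat_step:
  fixes lam \<gamma> \<kappa> :: "'i \<Rightarrow> real"
  assumes lam: "\<And>i. 0 < lam i \<and> lam i < 1"
    and t: "\<And>i. 0 \<le> \<gamma> i \<and> \<gamma> i \<le> kb \<and> 0 \<le> \<kappa> i \<and> \<kappa> i \<le> kb" and kb: "kb \<le> 1"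
    and step: "\<And>i. q i \<noteq> p i \<Longrightarrow> strict_BR U \<beta> c P i p (q i)"
  shows "(\<Prod>i\<in>UNIV. (1 - kb) * min (lam i) ((1 - lam i) / real (card (Pol U i :: ('x \<Rightarrow> 'u) set)))) \<le> Amat U \<beta> c P lam \<gamma> \<kappa> p q"
proof (rule Amat_lower[OF lam t kb], rule conjI)
  fix i
  have finP: "finite (Pol U i :: ('x \<Rightarrow> 'u) set)" by (rule finite_Pol) (rule U_fin)
  show "0 \<le> min (lam i) ((1 - lam i) / real (card (Pol U i :: ('x \<Rightarrow> 'u) set)))" using lam[of i] by simp
  show "min (lam i) ((1 - lam i) / real (card (Pol U i :: ('x \<Rightarrow> 'u) set))) \<le> Rker (lam i) (q i) (p i) (BR U \<beta> c P i p)"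
  proof (cases "q i = p i")
    case True
    then show ?thesis using lam[of i] by (auto simp: Rker_def)
  next
    case False
    have sb: "strict_BR U \<beta> c P i p (q i)" using step False by blast
    have qB: "q i \<in> BR U \<beta> c P i p" using sb by (simp add: strict_BR_def)
    have pB: "p i \<notin> BR U \<beta> c P i p" by (rule strict_not_BR[OF sb finP])
    have cB: "0 < card (BR U \<beta> c P i p)" using qB finite_subset[OF BR_sub finP] by (auto simp: card_gt_0_iff)
    have cle: "card (BR U \<beta> c P i p) \<le> card (Pol U i :: ('x \<Rightarrow> 'u) set)" by (rule card_mono[OF finP BR_sub])
    have "min (lam i) ((1 - lam i) / real (card (Pol U i :: ('x \<Rightarrow> 'u) set))) \<le> (1 - lam i) / real (card (Pol U i :: ('x \<Rightarrow> 'u) set))" by simp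
    also have "\<dots> \<le> (1 - lam i) / real (card (BR U \<beta> c P i p))"
      using lam[of i] cB cle by (intro divide_left_mono) auto
    also have "\<dots> = Rker (lam i) (q i) (p i) (BR U \<beta> c P i p)"
      using False qB pB by (simp add: Rker_def)
    finally show ?thesis .
  qed
qed

end


fun wv :: "('p \<Rightarrow> 'p \<Rightarrow> real) \<Rightarrow> 'p set \<Rightarrow> 'p set \<Rightarrow> nat \<Rightarrow> 'p \<Rightarrow> real" where
  "wv A S E 0 p = (if p \<in> E then 1 else 0)"
| "wv A S E (Suc n) p = (\<Sum>q\<in>S. A p q * wv A S E n q)"

locale mchain =
  fixes U :: "'i \<Rightarrow> 'u set" and A :: "('i \<Rightarrow> 'x \<Rightarrow> 'u) \<Rightarrow> ('i \<Rightarrow> 'x \<Rightarrow> 'u) \<Rightarrow> real"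
    and E :: "('i \<Rightarrow> 'x \<Rightarrow> 'u) set"
  assumes fin: "finite (JPol U :: ('i \<Rightarrow> 'x \<Rightarrow> 'u) set)"
    and ES: "E \<subseteq> JPol U"
    and Anon: "\<And>p q. p \<in> JPol U \<Longrightarrow> 0 \<le> A p q"
    and Arow: "\<And>p. p \<in> JPol U \<Longrightarrow> (\<Sum>q\<in>JPol U. A p q) = 1"
begin

abbreviation S :: "('i \<Rightarrow> 'x \<Rightarrow> 'u) set" where "S \<equiv> JPol U"
abbreviation "T \<equiv> mulA U A"

lemma T_nonneg: "(\<And>p. p \<in> S \<Longrightarrow> 0 \<le> \<nu> p) \<Longrightarrow> 0 \<le> T \<nu> q"
  unfolding mulA_def by (intro sum_nonneg mult_nonneg_nonneg Anon) auto

lemma T_mass: "(\<Sum>q\<in>S. T \<nu> q) = (\<Sum>p\<in>S. \<nu> p)"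
proof -
  have "(\<Sum>q\<in>S. T \<nu> q) = (\<Sum>p\<in>S. \<nu> p * (\<Sum>q\<in>S. A p q))"
    unfolding mulA_def by (simp add: sum_distrib_left) (rule sum.swap)
  also have "\<dots> = (\<Sum>p\<in>S. \<nu> p)" by (intro sum.cong) (simp_all add: Arow)
  finally show ?thesis .
qed

lemma Tn_nonneg: "(\<And>p. p \<in> S \<Longrightarrow> 0 \<le> \<nu> p) \<Longrightarrow> q \<in> S \<Longrightarrow> 0 \<le> (T ^^ n) \<nu> q"
  by (induction n arbitrary: q) (auto intro!: T_nonneg)

lemma Tn_mass: "(\<Sum>q\<in>S. (T ^^ n) \<nu> q) = (\<Sum>p\<in>S. \<nu> p)"
  by (induction n) (simp_all add: T_mass)

lemma duality: "(\<Sum>q\<in>E. (T ^^ n) \<nu> q) = (\<Sum>p\<in>S. \<nu> p * wv A S E n p)"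
proof (induction n arbitrary: \<nu>)
  case 0
  have "(\<Sum>p\<in>S. \<nu> p * wv A S E 0 p) = (\<Sum>p\<in>S. if p \<in> E then \<nu> p else 0)"
    by (intro sum.cong) auto
  also have "\<dots> = (\<Sum>p\<in>S \<inter> E. \<nu> p)" by (simp add: sum.inter_restrict[OF fin])
  also have "S \<inter> E = E" using ES by auto
  finally show ?case by simp
next
  case (Suc n)
  have "(\<Sum>q\<in>E. (T ^^ Suc n) \<nu> q) = (\<Sum>q\<in>E. (T ^^ n) (T \<nu>) q)"
    by (simp add: funpow_Suc_right del: funpow.simps)
  also have "\<dots> = (\<Sum>p\<in>S. T \<nu> p * wv A S E n p)" by (rule Suc.IH)
  also have "\<dots> = (\<Sum>r\<in>S. \<nu> r * (\<Sum>p\<in>S. A r p * wv A S E n p))"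
    unfolding mulA_def by (simp add: sum_distrib_left sum_distrib_right mult.assoc) (rule sum.swap)
  also have "\<dots> = (\<Sum>p\<in>S. \<nu> p * wv A S E (Suc n) p)" by simp
  finally show ?case .
qed

lemma wv_bounds: "p \<in> S \<Longrightarrow> 0 \<le> wv A S E n p \<and> wv A S E n p \<le> 1"
proof (induction n arbitrary: p)
  case 0
  then show ?case by simp
next
  case (Suc n)
  have "0 \<le> wv A S E (Suc n) p" using Suc by (auto intro!: sum_nonneg mult_nonneg_nonneg Anon)
  moreover have "wv A S E (Suc n) p \<le> (\<Sum>q\<in>S. A p q)"
    using Suc by (auto intro!: sum_mono mult_left_le Anon)
  ultimately show ?case using Arow[OF Suc.prems] by simp
qed

lemma wv_ge_step: "p \<in> S \<Longrightarrow> q \<in> S \<Longrightarrow> A p q * wv A S E n q \<le> wv A S E (Suc n) p"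
  by (simp, rule member_le_sum[where f="\<lambda>q. A p q * wv A S E n q"])
     (auto intro!: mult_nonneg_nonneg Anon simp: wv_bounds fin)

lemma wv_stay:
  assumes p: "p \<in> E" and s: "0 \<le> s" and App: "s \<le> A p p"
  shows "s ^ n \<le> wv A S E n p"
proof (induction n)
  case 0
  then show ?case using p by simp
next
  case (Suc n)
  have pS: "p \<in> S" using p ES by auto
  have "s ^ Suc n \<le> A p p * wv A S E n p"
    using Suc App s by (simp add: mult_mono)
  also have "\<dots> \<le> wv A S E (Suc n) p" by (rule wv_ge_step[OF pS pS])
  finally show ?case .
qed

lemma one_block:
  assumes hE: "\<And>p. p \<in> E \<Longrightarrow> sL \<le> wv A S E L p"
    and hN: "\<And>p. p \<in> S - E \<Longrightarrow> \<delta> \<le> wv A S E L p"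
    and d: "0 \<le> \<delta>" "\<delta> \<le> 1" and s: "0 \<le> sL" "sL \<le> 1"
    and \<nu>: "\<And>p. p \<in> S \<Longrightarrow> 0 \<le> \<nu> p" and m: "(\<Sum>p\<in>S. \<nu> p) = 1"
  shows "(\<Sum>q\<in>S - E. (T ^^ L) \<nu> q) \<le> (1 - sL) + (1 - \<delta>) * (\<Sum>q\<in>S - E. \<nu> q)"
proof -
  define f where "f = (\<Sum>q\<in>E. \<nu> q)"
  define g where "g = (\<Sum>q\<in>S - E. \<nu> q)"
  have split: "(\<Sum>q\<in>S. h q) = (\<Sum>q\<in>S - E. h q) + (\<Sum>q\<in>E. h q)" for h :: "_ \<Rightarrow> real"
    by (rule sum.subset_diff[OF ES fin])
  have fg: "f + g = 1" using m split[of \<nu>] by (simp add: f_def g_def)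
  have g0: "0 \<le> g" unfolding g_def by (rule sum_nonneg) (use \<nu> in auto)
  have "(\<Sum>q\<in>E. (T ^^ L) \<nu> q) = (\<Sum>p\<in>S. \<nu> p * wv A S E L p)" by (rule duality)
  also have "\<dots> = (\<Sum>p\<in>S - E. \<nu> p * wv A S E L p) + (\<Sum>p\<in>E. \<nu> p * wv A S E L p)" by (rule split)
  also have "\<dots> \<ge> \<delta> * g + sL * f"
  proof (rule add_mono)
    show "\<delta> * g \<le> (\<Sum>p\<in>S - E. \<nu> p * wv A S E L p)"
      unfolding g_def sum_distrib_left
    proof (rule sum_mono)
      fix p assume p: "p \<in> S - E"
      have "\<delta> * \<nu> p \<le> wv A S E L p * \<nu> p" using \<nu>[of p] hN[OF p] p by (intro mult_right_mono) auto
      then show "\<delta> * \<nu> p \<le> \<nu> p * wv A S E L p" by (simp add: mult.commute)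
    qed
    show "sL * f \<le> (\<Sum>p\<in>E. \<nu> p * wv A S E L p)"
      unfolding f_def sum_distrib_left
    proof (rule sum_mono)
      fix p assume p: "p \<in> E"
      have "sL * \<nu> p \<le> wv A S E L p * \<nu> p" using \<nu>[of p] hE[OF p] p ES by (intro mult_right_mono) auto
      then show "sL * \<nu> p \<le> \<nu> p * wv A S E L p" by (simp add: mult.commute)
    qed
  qed
  finally have f': "\<delta> * g + sL * f \<le> (\<Sum>q\<in>E. (T ^^ L) \<nu> q)" .
  have m': "(\<Sum>q\<in>S - E. (T ^^ L) \<nu> q) + (\<Sum>q\<in>E. (T ^^ L) \<nu> q) = 1"
    using Tn_mass[of L \<nu>] split[of "(T ^^ L) \<nu>"] m by simp
  have "sL * g \<le> g" using s g0 by (simp add: mult_left_le_one_le)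
  moreover have "sL * f = sL - sL * g"
  proof -
    have "f = 1 - g" using fg by simp
    then show ?thesis by (simp add: right_diff_distrib)
  qed
  moreover have "(1 - \<delta>) * g = g - \<delta> * g" by (simp add: left_diff_distrib)
  ultimately show ?thesis using f' m' unfolding g_def[symmetric] by linarith
qed

lemma blocks:
  assumes hE: "\<And>p. p \<in> E \<Longrightarrow> sL \<le> wv A S E L p"
    and hN: "\<And>p. p \<in> S - E \<Longrightarrow> \<delta> \<le> wv A S E L p"
    and d: "0 < \<delta>" "\<delta> \<le> 1" and s: "0 \<le> sL" "sL \<le> 1"
    and \<nu>: "\<And>p. p \<in> S \<Longrightarrow> 0 \<le> \<nu> p" and m: "(\<Sum>p\<in>S. \<nu> p) = 1"
  shows "(\<Sum>q\<in>S - E. ((T ^^ L) ^^ j) \<nu> q) \<le> (1 - \<delta>) ^ j * (\<Sum>q\<in>S - E. \<nu> q) + (1 - sL) / \<delta>"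
proof (induction j)
  case 0
  have "0 \<le> (1 - sL) / \<delta>" using d s by simp
  then show ?case by simp
next
  case (Suc j)
  define \<nu>j where "\<nu>j = ((T ^^ L) ^^ j) \<nu>"
  have eq: "((T ^^ L) ^^ j) = T ^^ (L * j)" by (simp add: funpow_mult)
  have \<nu>j0: "\<And>p. p \<in> S \<Longrightarrow> 0 \<le> \<nu>j p" unfolding \<nu>j_def eq by (rule Tn_nonneg[OF \<nu>])
  have \<nu>jm: "(\<Sum>p\<in>S. \<nu>j p) = 1" unfolding \<nu>j_def eq using Tn_mass m by simp
  have "(\<Sum>q\<in>S - E. ((T ^^ L) ^^ Suc j) \<nu> q) = (\<Sum>q\<in>S - E. (T ^^ L) \<nu>j q)"
    by (simp add: \<nu>j_def)
  also have "\<dots> \<le> (1 - sL) + (1 - \<delta>) * (\<Sum>q\<in>S - E. \<nu>j q)"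
    by (rule one_block[OF hE hN _ d(2) s \<nu>j0 \<nu>jm]) (use d in auto)
  also have "\<dots> \<le> (1 - sL) + (1 - \<delta>) * ((1 - \<delta>) ^ j * (\<Sum>q\<in>S - E. \<nu> q) + (1 - sL) / \<delta>)"
    using Suc d unfolding \<nu>j_def by (intro add_left_mono mult_left_mono) auto
  also have "\<dots> = (1 - \<delta>) ^ Suc j * (\<Sum>q\<in>S - E. \<nu> q) + (1 - sL) / \<delta>"
    using d by (simp add: field_simps)
  finally show ?case .
qed

end


context mchain
begin

lemma wv_path:
  assumes a0: "0 \<le> a"
    and hE: "\<And>p n. p \<in> E \<Longrightarrow> a ^ n \<le> wv A S E n p"
    and hstep: "\<And>p q. p \<in> S \<Longrightarrow> q \<in> S \<Longrightarrow> stp p q \<Longrightarrow> a \<le> A p q"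
  shows "ps \<noteq> [] \<Longrightarrow> set ps \<subseteq> S \<Longrightarrow> (\<forall>k. Suc k < length ps \<longrightarrow> stp (ps ! k) (ps ! Suc k))
     \<Longrightarrow> last ps \<in> E \<Longrightarrow> length ps - 1 \<le> n \<Longrightarrow> a ^ n \<le> wv A S E n (hd ps)"
proof (induction ps arbitrary: n)
  case Nil
  then show ?case by simp
next
  case (Cons x xs)
  show ?case
  proof (cases xs)
    case Nil
    then show ?thesis using Cons.prems hE by simp
  next
    case (Cons y ys)
    note xs = this
    obtain n' where n: "n = Suc n'" using Cons.prems(5) xs by (cases n) auto
    have st: "stp x y" using Cons.prems(3)[rule_format, of 0] xs by simp
    have IH: "a ^ n' \<le> wv A S E n' (hd xs)"
    proof (rule Cons.IH)
      show "xs \<noteq> []" using xs by simp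
      show "set xs \<subseteq> S" using Cons.prems(2) by simp
      show "\<forall>k. Suc k < length xs \<longrightarrow> stp (xs ! k) (xs ! Suc k)"
        using Cons.prems(3) by (metis Suc_less_eq length_Cons nth_Cons_Suc)
      show "last xs \<in> E" using Cons.prems(4) xs by simp
      show "length xs - 1 \<le> n'" using Cons.prems(5) n xs by simp
    qed
    have xS: "x \<in> S" and yS: "y \<in> S" using Cons.prems(2) xs by auto
    have "a ^ n = a * a ^ n'" by (simp add: n)
    also have "\<dots> \<le> A x y * wv A S E n' y"
      using IH xs hstep[OF xS yS st] a0 by (intro mult_mono) (auto simp: wv_bounds yS)
    also have "\<dots> \<le> wv A S E (Suc n') x" by (rule wv_ge_step[OF xS yS])
    finally show ?thesis by (simp add: n)
  qed
qed

end

lemma mulA_cong: "(\<And>p. p \<in> JPol U \<Longrightarrow> \<nu>1 p = \<nu>2 p) \<Longrightarrow> mulA U A \<nu>1 = mulA U A \<nu>2"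
  unfolding mulA_def by (intro ext sum.cong) auto



context game
begin

lemma main_bound:
  fixes lam :: "'i \<Rightarrow> real" and \<epsilon> :: real
  assumes WA: "weakly_acyclic U \<beta> c P" and lam: "\<And>i. 0 < lam i \<and> lam i < 1" and eps: "0 < \<epsilon>"
  shows "\<exists>kb mb. 0 < kb \<and> kb < 1 \<and> (\<forall>\<gamma> \<kappa>. (\<forall>i. 0 < \<gamma> i \<and> 0 < \<kappa> i \<and> max (\<gamma> i) (\<kappa> i) < kb) \<longrightarrow>
     (\<forall>m\<ge>mb. \<forall>\<nu>. (\<forall>p\<in>JPol U. 0 \<le> \<nu> p) \<and> (\<Sum>p\<in>JPol U. \<nu> p) = 1 \<longrightarrow>
        1 - \<epsilon> / 4 \<le> (\<Sum>q\<in>Eq_set U \<beta> c P. ((mulA U (Amat U \<beta> c P lam \<gamma> \<kappa>)) ^^ m) \<nu> q)))"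
proof -
  define E where "E = Eq_set U \<beta> c P"
  have finS: "finite (JPol U :: ('i \<Rightarrow> 'x \<Rightarrow> 'u) set)" by (rule finite_JPol) (rule U_fin)
  have ES: "E \<subseteq> JPol U" by (auto simp: E_def Eq_set_def)
  define pth where "pth p = (SOME ps. ps \<noteq> [] \<and> hd ps = p \<and> sbr_path U \<beta> c P ps \<and> last ps \<in> E)" for p
  have pth: "pth p \<noteq> [] \<and> hd (pth p) = p \<and> sbr_path U \<beta> c P (pth p) \<and> last (pth p) \<in> E"
    if "p \<in> JPol U" for p
  proof -
    have "\<exists>ps. ps \<noteq> [] \<and> hd ps = p \<and> sbr_path U \<beta> c P ps \<and> last ps \<in> E"
      using WA that unfolding weakly_acyclic_def E_def by blast
    then show ?thesis unfolding pth_def by (rule someI_ex)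
  qed
  define L where "L = Max ((\<lambda>p. length (pth p) - 1) ` JPol U)"
  have Lge: "length (pth p) - 1 \<le> L" if "p \<in> JPol U" for p
    unfolding L_def using finS that by (intro Max_ge) auto
  define N where "N = card (UNIV :: 'i set)"
  define cc where "cc i = min (lam i) ((1 - lam i) / real (card (Pol U i :: ('x \<Rightarrow> 'u) set)))" for i
  have cc: "0 < cc i \<and> cc i \<le> 1" for i
  proof -
    have "finite (Pol U i :: ('x \<Rightarrow> 'u) set)" by (rule finite_Pol) (rule U_fin)
    moreover have "(Pol U i :: ('x \<Rightarrow> 'u) set) \<noteq> {}" by (rule Pol_ne) (rule U_ne)
    ultimately have "0 < card (Pol U i :: ('x \<Rightarrow> 'u) set)" by (simp add: card_gt_0_iff)
    then show ?thesis using lam[of i] unfolding cc_def by auto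
  qed
  define a0 where "a0 = (\<Prod>i\<in>(UNIV::'i set). (1/2) * cc i)"
  have a0: "0 < a0" "a0 \<le> 1" unfolding a0_def using cc
    by (auto intro!: prod_pos prod_le_1 simp: less_imp_le) (use cc in \<open>smt (verit)\<close>)
  define \<delta> where "\<delta> = a0 ^ L"
  have d: "0 < \<delta>" "\<delta> \<le> 1" unfolding \<delta>_def using a0 by (auto simp: power_le_one)
  obtain J where J: "(1 - \<delta>) ^ J < \<epsilon> / 8" using real_arch_pow_inv[of "\<epsilon>/8" "1 - \<delta>"] eps d by auto
  define kb where "kb = min (1/2) (\<delta> * \<epsilon> / (8 * (real N * real L + 1)))"
  have kbpos: "0 < kb" unfolding kb_def using d eps by (auto intro!: divide_pos_pos add_nonneg_pos)
  have kb1: "kb \<le> 1/2" unfolding kb_def by (rule min.cobounded1)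
  have kbNL: "real N * real L * kb \<le> \<delta> * \<epsilon> / 8"
  proof -
    define X where "X = \<delta> * \<epsilon> / (8 * (real N * real L + 1))"
    have X0: "0 \<le> X" unfolding X_def using d eps by auto
    have "real N * real L * kb \<le> real N * real L * X" unfolding kb_def X_def[symmetric]
      by (intro mult_left_mono) auto
    also have "\<dots> \<le> (real N * real L + 1) * X" using X0 by (simp add: distrib_right)
    also have "\<dots> = \<delta> * \<epsilon> / 8"
    proof -
      have "0 < real N * real L + 1" by (simp add: add_nonneg_pos)
      then show ?thesis unfolding X_def by (simp add: field_simps)
    qed
    finally show ?thesis .
  qed
  show ?thesis
  proof (intro exI[of _ kb] exI[of _ "J * L"] conjI allI impI)
    show "0 < kb" by (rule kbpos)
    show "kb < 1" using kb1 by simp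
    fix \<gamma> \<kappa> :: "'i \<Rightarrow> real" and m :: nat and \<nu> :: "('i \<Rightarrow> 'x \<Rightarrow> 'u) \<Rightarrow> real"
    assume cond: "\<forall>i. 0 < \<gamma> i \<and> 0 < \<kappa> i \<and> max (\<gamma> i) (\<kappa> i) < kb"
      and m: "J * L \<le> m" and \<nu>: "(\<forall>p\<in>JPol U. 0 \<le> \<nu> p) \<and> (\<Sum>p\<in>JPol U. \<nu> p) = 1"
    have t: "\<And>i. 0 \<le> \<gamma> i \<and> \<gamma> i \<le> kb \<and> 0 \<le> \<kappa> i \<and> \<kappa> i \<le> kb" using cond
      by (metis less_imp_le max.strict_boundedE)
    have kbl1: "kb \<le> 1" using kb1 by simp
    have t1: "\<And>i. 0 \<le> \<gamma> i \<and> \<gamma> i \<le> 1 \<and> 0 \<le> \<kappa> i \<and> \<kappa> i \<le> 1" using t kbl1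
      by (meson order_trans)
    define A where "A = Amat U \<beta> c P lam \<gamma> \<kappa>"
    interpret mc: mchain U A E
    proof
      show "finite (JPol U :: ('i \<Rightarrow> 'x \<Rightarrow> 'u) set)" by (rule finS)
      show "E \<subseteq> JPol U" by (rule ES)
      show "\<And>p q. p \<in> JPol U \<Longrightarrow> 0 \<le> A p q" unfolding A_def by (rule Amat_nonneg[OF lam t1])
      show "\<And>p. p \<in> JPol U \<Longrightarrow> (\<Sum>q\<in>JPol U. A p q) = 1" unfolding A_def by (rule Amat_rowsum[OF lam])
    qed
    define s where "s = (1 - kb) ^ N"
    have s: "0 \<le> s" "s \<le> 1" unfolding s_def using kb1 kbpos by (auto simp: power_le_one)
    have stay: "s \<le> A p p" if "p \<in> E" for p
      unfolding s_def N_def A_def by (rule Amat_stay[OF lam t kbl1]) (use that in \<open>simp add: E_def\<close>)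
    have half: "(1/2) * cc i \<le> 1 - kb" for i
    proof -
      have "(1/2) * cc i \<le> 1/2" using cc[of i] by simp
      then show ?thesis using kb1 by simp
    qed
    have a0s: "a0 \<le> s"
    proof -
      have "a0 \<le> (\<Prod>i\<in>(UNIV::'i set). 1 - kb)" unfolding a0_def
        by (rule prod_mono) (use cc half in \<open>auto simp: less_imp_le\<close>)
      then show ?thesis by (simp add: s_def N_def)
    qed
    have hEa: "a0 ^ n \<le> wv A (JPol U) E n p" if "p \<in> E" for p n
      by (rule mc.wv_stay[OF that]) (use a0 a0s stay[OF that] in auto)
    define stp where "stp p q \<longleftrightarrow> (\<forall>i. q i \<noteq> p i \<longrightarrow> strict_BR U \<beta> c P i p (q i))" for p q :: "'i \<Rightarrow> 'x \<Rightarrow> 'u"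
    have hstep: "a0 \<le> A p q" if "p \<in> JPol U" "q \<in> JPol U" "stp p q" for p q
    proof -
      have "a0 \<le> (\<Prod>i\<in>(UNIV::'i set). (1 - kb) * cc i)" unfolding a0_def
        by (rule prod_mono) (use cc half kb1 in \<open>auto intro!: mult_right_mono simp: less_imp_le\<close>)
      also have "\<dots> \<le> A p q" unfolding A_def cc_def
        by (rule Amat_step[OF lam t kbl1]) (use that in \<open>auto simp: stp_def\<close>)
      finally show ?thesis .
    qed
    have hN: "\<delta> \<le> wv A (JPol U) E L p" if "p \<in> JPol U - E" for p
    proof -
      have pS: "p \<in> JPol U" using that by simp
      note pp = pth[OF pS]
      have sp: "set (pth p) \<subseteq> JPol U" using pp by (simp add: sbr_path_def)
      have steps: "\<forall>k. Suc k < length (pth p) \<longrightarrow> stp (pth p ! k) (pth p ! Suc k)"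
        using pp by (simp add: sbr_path_def stp_def)
      have "a0 ^ L \<le> wv A (JPol U) E L (hd (pth p))"
        by (rule mc.wv_path[of a0 stp, OF _ hEa hstep]) (use a0 pp sp steps Lge[OF pS] in auto)
      then show ?thesis using pp by (simp add: \<delta>_def)
    qed
    define sL where "sL = s ^ L"
    have sL: "0 \<le> sL" "sL \<le> 1" unfolding sL_def using s by (auto simp: power_le_one)
    have hE: "sL \<le> wv A (JPol U) E L p" if "p \<in> E" for p
      unfolding sL_def by (rule mc.wv_stay[OF that s(1) stay[OF that]])
    have bern: "1 - sL \<le> real N * real L * kb"
    proof -
      have "1 + real (N * L) * (- kb) \<le> (1 + - kb) ^ (N * L)"
        by (rule Bernoulli_inequality) (use kb1 in simp)
      moreover have "((1 - kb) ^ N) ^ L = (1 + - kb) ^ (N * L)" by (simp add: power_mult)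
      ultimately show ?thesis unfolding sL_def s_def by (simp add: algebra_simps)
    qed
    have eta: "(1 - sL) / \<delta> \<le> \<epsilon> / 8"
    proof -
      have "1 - sL \<le> \<delta> * \<epsilon> / 8" using bern kbNL by linarith
      then show ?thesis using d by (simp add: divide_le_eq mult.commute)
    qed
    define \<nu>1 where "\<nu>1 = (mulA U A ^^ (m - J * L)) \<nu>"
    have \<nu>10: "\<And>p. p \<in> JPol U \<Longrightarrow> 0 \<le> \<nu>1 p" unfolding \<nu>1_def by (rule mc.Tn_nonneg) (use \<nu> in auto)
    have \<nu>1m: "(\<Sum>p\<in>JPol U. \<nu>1 p) = 1" unfolding \<nu>1_def using mc.Tn_mass \<nu> by simp
    have eqm: "(mulA U A ^^ m) \<nu> = ((mulA U A ^^ L) ^^ J) \<nu>1"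
    proof -
      have "m = L * J + (m - J * L)" using m by (simp add: mult.commute)
      then have "mulA U A ^^ m = (mulA U A ^^ L) ^^ J \<circ> mulA U A ^^ (m - J * L)"
        by (metis funpow_add funpow_mult)
      then show ?thesis unfolding \<nu>1_def by simp
    qed
    have split: "(\<Sum>q\<in>JPol U. h q) = (\<Sum>q\<in>JPol U - E. h q) + (\<Sum>q\<in>E. h q)" for h :: "_ \<Rightarrow> real"
      by (rule sum.subset_diff[OF ES finS])
    have g1: "(\<Sum>q\<in>JPol U - E. \<nu>1 q) \<le> 1"
    proof -
      have "0 \<le> (\<Sum>q\<in>E. \<nu>1 q)" using ES \<nu>10 by (auto intro!: sum_nonneg)
      then show ?thesis using split[of \<nu>1] \<nu>1m by linarith
    qed
    have g1n: "0 \<le> (\<Sum>q\<in>JPol U - E. \<nu>1 q)" using \<nu>10 by (auto intro!: sum_nonneg)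
    have "(\<Sum>q\<in>JPol U - E. (mulA U A ^^ m) \<nu> q) \<le> (1 - \<delta>) ^ J * (\<Sum>q\<in>JPol U - E. \<nu>1 q) + (1 - sL) / \<delta>"
      unfolding eqm by (rule mc.blocks[OF hE hN d sL \<nu>10 \<nu>1m])
    also have "\<dots> \<le> (1 - \<delta>) ^ J * 1 + \<epsilon> / 8"
      using g1 eta d by (intro add_mono mult_left_mono) auto
    finally have g: "(\<Sum>q\<in>JPol U - E. (mulA U A ^^ m) \<nu> q) \<le> \<epsilon> / 4" using J by simp
    have "(\<Sum>q\<in>JPol U. (mulA U A ^^ m) \<nu> q) = 1" using mc.Tn_mass \<nu> by simp
    then have "1 - \<epsilon> / 4 \<le> (\<Sum>q\<in>E. (mulA U A ^^ m) \<nu> q)" using split[of "(mulA U A ^^ m) \<nu>"] g by linarith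
    then show "1 - \<epsilon> / 4 \<le> (\<Sum>q\<in>Eq_set U \<beta> c P. (mulA U (Amat U \<beta> c P lam \<gamma> \<kappa>) ^^ m) \<nu> q)"
      by (simp add: E_def A_def)
  qed
qed

end

theorem lemma3:
  fixes U :: "'i::finite \<Rightarrow> 'u set"
    and \<beta> :: "'i \<Rightarrow> real"
    and c :: "'i \<Rightarrow> 'x::finite \<Rightarrow> ('i \<Rightarrow> 'u) \<Rightarrow> real"
    and P :: "'x \<Rightarrow> ('i \<Rightarrow> 'u) \<Rightarrow> 'x \<Rightarrow> real"
    and lam :: "'i \<Rightarrow> real"
  assumes U_fin: "\<And>i. finite (U i)" and U_ne: "\<And>i. U i \<noteq> {}"
    and beta: "\<And>i. 0 < \<beta> i \<and> \<beta> i < 1"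
    and P_nonneg: "\<And>x u y. (\<forall>i. u i \<in> U i) \<Longrightarrow> 0 \<le> P x u y"
    and P_sum: "\<And>x u. (\<forall>i. u i \<in> U i) \<Longrightarrow> (\<Sum>y\<in>UNIV. P x u y) = 1"
    and WA: "weakly_acyclic U \<beta> c P"
    and lam: "\<And>i. 0 < lam i \<and> lam i < 1"
  shows "\<forall>\<epsilon>>0. \<exists>kb. 0 < kb \<and> kb < 1 \<and>
     (\<forall>\<gamma> \<kappa>. (\<forall>i. 0 < \<gamma> i \<and> 0 < \<kappa> i \<and> max (\<gamma> i) (\<kappa> i) < kb) \<longrightarrow>
        (\<forall>\<mu>. stationary U (Amat U \<beta> c P lam \<gamma> \<kappa>) \<mu> \<longrightarrow>
              sum \<mu> (Eq_set U \<beta> c P) \<ge> 1 - \<epsilon> / 4)) \<and>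
     (\<exists>mb::nat. \<forall>\<gamma> \<kappa>. (\<forall>i. 0 < \<gamma> i \<and> 0 < \<kappa> i \<and> max (\<gamma> i) (\<kappa> i) < kb) \<longrightarrow>
        (\<forall>m\<ge>mb. \<forall>\<mu>0. is_dist U \<mu>0 \<longrightarrow>
           sum ((mulA U (Amat U \<beta> c P lam \<gamma> \<kappa>) ^^ m) \<mu>0) (Eq_set U \<beta> c P) \<ge> 1 - \<epsilon> / 2))"
proof (intro allI impI)
  fix \<epsilon> :: real
  assume eps: "0 < \<epsilon>"
  interpret g: game U \<beta> c P
    by unfold_locales (use U_fin U_ne beta P_nonneg P_sum in auto)
  obtain kb mb where kb: "0 < kb" "kb < 1"
    and B: "\<And>\<gamma> \<kappa> m \<nu>. (\<forall>i. 0 < \<gamma> i \<and> 0 < \<kappa> i \<and> max (\<gamma> i) (\<kappa> i) < kb) \<Longrightarrow> mb \<le> m \<Longrightarrow>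
        (\<forall>p\<in>JPol U. 0 \<le> \<nu> p) \<and> (\<Sum>p\<in>JPol U. \<nu> p) = 1 \<Longrightarrow>
        1 - \<epsilon> / 4 \<le> (\<Sum>q\<in>Eq_set U \<beta> c P. ((mulA U (Amat U \<beta> c P lam \<gamma> \<kappa>)) ^^ m) \<nu> q)"
    using g.main_bound[where lam=lam and \<epsilon>=\<epsilon>, OF WA lam eps] by blast
  have ES: "Eq_set U \<beta> c P \<subseteq> JPol U" by (auto simp: Eq_set_def)
  show "\<exists>kb. 0 < kb \<and> kb < 1 \<and>
     (\<forall>\<gamma> \<kappa>. (\<forall>i. 0 < \<gamma> i \<and> 0 < \<kappa> i \<and> max (\<gamma> i) (\<kappa> i) < kb) \<longrightarrow>
        (\<forall>\<mu>. stationary U (Amat U \<beta> c P lam \<gamma> \<kappa>) \<mu> \<longrightarrow>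
              sum \<mu> (Eq_set U \<beta> c P) \<ge> 1 - \<epsilon> / 4)) \<and>
     (\<exists>mb::nat. \<forall>\<gamma> \<kappa>. (\<forall>i. 0 < \<gamma> i \<and> 0 < \<kappa> i \<and> max (\<gamma> i) (\<kappa> i) < kb) \<longrightarrow>
        (\<forall>m\<ge>mb. \<forall>\<mu>0. is_dist U \<mu>0 \<longrightarrow>
           sum ((mulA U (Amat U \<beta> c P lam \<gamma> \<kappa>) ^^ m) \<mu>0) (Eq_set U \<beta> c P) \<ge> 1 - \<epsilon> / 2))"
  proof (intro exI[of _ kb] conjI allI impI kb exI[of _ mb])
    fix \<gamma> \<kappa> :: "'i \<Rightarrow> real" and \<mu> :: "('i \<Rightarrow> 'x \<Rightarrow> 'u) \<Rightarrow> real"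
    assume cond: "\<forall>i. 0 < \<gamma> i \<and> 0 < \<kappa> i \<and> max (\<gamma> i) (\<kappa> i) < kb"
      and st: "stationary U (Amat U \<beta> c P lam \<gamma> \<kappa>) \<mu>"
    let ?T = "mulA U (Amat U \<beta> c P lam \<gamma> \<kappa>)"
    have d: "(\<forall>p\<in>JPol U. 0 \<le> \<mu> p) \<and> (\<Sum>p\<in>JPol U. \<mu> p) = 1"
      using st by (simp add: stationary_def is_dist_def)
    have fix_: "(?T ^^ n) \<mu> q = \<mu> q" if "q \<in> JPol U" for n q
      using that
    proof (induction n arbitrary: q)
      case 0
      then show ?case by simp
    next
      case (Suc n)
      have "(?T ^^ Suc n) \<mu> q = ?T ((?T ^^ n) \<mu>) q" by simp
      also have "?T ((?T ^^ n) \<mu>) = ?T \<mu>" by (rule mulA_cong) (rule Suc.IH)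
      also have "?T \<mu> q = \<mu> q" using st Suc.prems by (simp add: stationary_def)
      finally show ?case .
    qed
    have "1 - \<epsilon> / 4 \<le> (\<Sum>q\<in>Eq_set U \<beta> c P. (?T ^^ mb) \<mu> q)"
      by (rule B[OF cond _ d]) simp
    also have "\<dots> = sum \<mu> (Eq_set U \<beta> c P)"
      by (rule sum.cong) (use fix_ ES in auto)
    finally show "sum \<mu> (Eq_set U \<beta> c P) \<ge> 1 - \<epsilon> / 4" .
  next
    fix \<gamma> \<kappa> :: "'i \<Rightarrow> real" and m :: nat and \<mu>0 :: "('i \<Rightarrow> 'x \<Rightarrow> 'u) \<Rightarrow> real"
    assume cond: "\<forall>i. 0 < \<gamma> i \<and> 0 < \<kappa> i \<and> max (\<gamma> i) (\<kappa> i) < kb"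
      and m: "mb \<le> m" and d0: "is_dist U \<mu>0"
    have d: "(\<forall>p\<in>JPol U. 0 \<le> \<mu>0 p) \<and> (\<Sum>p\<in>JPol U. \<mu>0 p) = 1"
      using d0 by (simp add: is_dist_def)
    have "1 - \<epsilon> / 4 \<le> (\<Sum>q\<in>Eq_set U \<beta> c P. ((mulA U (Amat U \<beta> c P lam \<gamma> \<kappa>)) ^^ m) \<mu>0 q)"
      by (rule B[OF cond m d])
    then show "sum ((mulA U (Amat U \<beta> c P lam \<gamma> \<kappa>) ^^ m) \<mu>0) (Eq_set U \<beta> c P) \<ge> 1 - \<epsilon> / 2"
      using eps by simp
  qed
qed

end
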